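(* Assume $\bar p=\mu\cdot\mathbf p=1/2$. There is a constant $A>0$ such that for every initial distribution $\eta$ on $\mathcal R$ and all $n\ge1$, $$E_\eta\Big[\Big(\sum_{i=1}^n(\tilde G_i-1)\Big)^4\Big]\le An^2.$$
   Context: Let $\mathcal R=\{1,\dots,N\}$ and let $K$ be a stochastic matrix on $\mathcal R$ whose Markov chain has a unique closed irreducible subset; let $\mu$ (row vector) be its unique stationary distribution. Fix $p:\mathcal R\to(0,1)$, $\mathbf p=(p(1),\dots,p(N))^t$. Under $P_\eta$, $(R_j)_{j\ge1}$ is a Markov chain with transition matrix $K$ and $R_1\sim\eta$, and given $(R_j)$ the $\xi(j)$ are independent Bernoulli$(p(R_j))$. Let $F_m=\inf\{k\ge0:\sum_{j=1}^{k+m}\xi(j)=m\}$ (number of failures before the $m$-th success), $F_0=0$, and $\tilde G_m=F_m-F_{m-1}$. *)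

theory Defs
  imports "HOL-Probability.Probability"
begin

text \<open>Markov kernel on a finite state space 's (playing the role of R = {1..N}).\<close>

definition stochastic_matrix :: "('s::finite \<Rightarrow> 's \<Rightarrow> real) \<Rightarrow> bool" where
  "stochastic_matrix K \<longleftrightarrow> (\<forall>x y. 0 \<le> K x y) \<and> (\<forall>x. (\<Sum>y\<in>UNIV. K x y) = 1)"

definition prob_vector :: "('s::finite \<Rightarrow> real) \<Rightarrow> bool" where
  "prob_vector \<eta> \<longleftrightarrow> (\<forall>x. 0 \<le> \<eta> x) \<and> (\<Sum>x\<in>UNIV. \<eta> x) = 1"

definition stationary :: "('s::finite \<Rightarrow> 's \<Rightarrow> real) \<Rightarrow> ('s \<Rightarrow> real) \<Rightarrow> bool" where
  "stationary K \<mu> \<longleftrightarrow> prob_vector \<mu> \<and> (\<forall>y. (\<Sum>x\<in>UNIV. \<mu> x * K x y) = \<mu> y)"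

definition reaches :: "('s \<Rightarrow> 's \<Rightarrow> real) \<Rightarrow> 's \<Rightarrow> 's \<Rightarrow> bool" where
  "reaches K x y \<longleftrightarrow> (x, y) \<in> {(a, b). 0 < K a b}\<^sup>*"

definition closed_set :: "('s \<Rightarrow> 's \<Rightarrow> real) \<Rightarrow> 's set \<Rightarrow> bool" where
  "closed_set K C \<longleftrightarrow> (\<forall>x\<in>C. \<forall>y. 0 < K x y \<longrightarrow> y \<in> C)"

definition closed_irreducible :: "('s \<Rightarrow> 's \<Rightarrow> real) \<Rightarrow> 's set \<Rightarrow> bool" where
  "closed_irreducible K C \<longleftrightarrow> C \<noteq> {} \<and> closed_set K C \<and> (\<forall>x\<in>C. \<forall>y\<in>C. reaches K x y)"

text \<open>The joint law P_eta of (R_j, xi(j))_{j>=1}: R Markov(eta, K), and given R the xi(j)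
  independent Bernoulli(p(R_j)); characterised by all finite-dimensional distributions.\<close>

definition has_law ::
  "('s::finite \<Rightarrow> 's \<Rightarrow> real) \<Rightarrow> ('s \<Rightarrow> real) \<Rightarrow> ('s \<Rightarrow> real) \<Rightarrow> 'a measure
     \<Rightarrow> (nat \<Rightarrow> 'a \<Rightarrow> 's) \<Rightarrow> (nat \<Rightarrow> 'a \<Rightarrow> bool) \<Rightarrow> bool" where
  "has_law K p \<eta> M R \<xi> \<longleftrightarrow>
     prob_space M \<and>
     (\<forall>j. R j \<in> measurable M (count_space UNIV)) \<and>
     (\<forall>j. \<xi> j \<in> measurable M (count_space UNIV)) \<and>
     (\<forall>m rs bs. 1 \<le> m \<longrightarrow> length rs = m \<longrightarrow> length bs = m \<longrightarrow>
        measure M {\<omega> \<in> space M. \<forall>j<m. R (Suc j) \<omega> = rs ! j \<and> \<xi> (Suc j) \<omega> = bs ! j}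
        = \<eta> (rs ! 0) * (\<Prod>j<m - 1. K (rs ! j) (rs ! Suc j))
            * (\<Prod>j<m. if bs ! j then p (rs ! j) else 1 - p (rs ! j)))"

text \<open>F_m = number of failures before the m-th success: least k with sum_{j=1}^{k+m} xi(j) = m.\<close>

definition failures :: "(nat \<Rightarrow> 'a \<Rightarrow> bool) \<Rightarrow> nat \<Rightarrow> 'a \<Rightarrow> nat" where
  "failures \<xi> m \<omega> = (LEAST k. (\<Sum>j=1..k+m. (if \<xi> j \<omega> then 1 else 0 :: nat)) = m)"

definition Gt :: "(nat \<Rightarrow> 'a \<Rightarrow> bool) \<Rightarrow> nat \<Rightarrow> 'a \<Rightarrow> real" where
  "Gt \<xi> m \<omega> = real (failures \<xi> m \<omega>) - real (failures \<xi> (m - 1) \<omega>)"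

end

theory Submission
  imports Defs
begin


lemma nonneg_inv_multiple:
  fixes K :: "'s::finite \<Rightarrow> 's \<Rightarrow> real"
  assumes uniq: "\<forall>\<nu>. stationary K \<nu> \<longrightarrow> \<nu> = \<mu>"
    and w0: "\<And>x. 0 \<le> w x" and winv: "\<And>y. (\<Sum>x\<in>UNIV. w x * K x y) = w y"
  shows "\<exists>c. \<forall>x. w x = c * \<mu> x"
proof (cases "(\<Sum>x\<in>UNIV. w x) = 0")
  case True
  then have "\<forall>x. w x = 0" using w0 by (simp add: sum_nonneg_eq_0_iff)
  then show ?thesis by (intro exI[of _ 0]) simp
next
  case False
  define s where "s = (\<Sum>x\<in>UNIV. w x)"
  have s0: "s > 0" using False w0 unfolding s_def by (metis less_eq_real_def sum_nonneg)
  have "stationary K (\<lambda>x. w x / s)"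
    unfolding stationary_def prob_vector_def
  proof (intro conjI allI)
    show "0 \<le> w x / s" for x using w0 s0 by simp
    show "(\<Sum>x\<in>UNIV. w x / s) = 1" using s0 by (simp add: s_def[symmetric] sum_divide_distrib[symmetric])
    show "(\<Sum>x\<in>UNIV. w x / s * K x y) = w y / s" for y
      using winv[of y] by (simp add: sum_divide_distrib[symmetric])
  qed
  then have "(\<lambda>x. w x / s) = \<mu>" using uniq by blast
  then have "\<forall>x. w x = s * \<mu> x" using s0 by (metis nonzero_mult_div_cancel_left order_less_irrefl times_divide_eq_right)
  then show ?thesis by blast
qed

lemma inv_multiple:
  fixes K :: "'s::finite \<Rightarrow> 's \<Rightarrow> real"
  assumes stoch: "stochastic_matrix K" and uniq: "\<forall>\<nu>. stationary K \<nu> \<longrightarrow> \<nu> = \<mu>"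
    and inv: "\<And>y. (\<Sum>x\<in>UNIV. \<nu> x * K x y) = \<nu> y"
  shows "\<exists>c. \<forall>x. \<nu> x = c * \<mu> x"
proof -
  have K0: "\<And>x y. 0 \<le> K x y" and K1: "\<And>x. (\<Sum>y\<in>UNIV. K x y) = 1"
    using stoch unfolding stochastic_matrix_def by auto
  define a where "a x = \<bar>\<nu> x\<bar>" for x
  have ge: "a y \<le> (\<Sum>x\<in>UNIV. a x * K x y)" for y
  proof -
    have "a y = \<bar>\<Sum>x\<in>UNIV. \<nu> x * K x y\<bar>" using inv[of y] by (simp add: a_def)
    also have "\<dots> \<le> (\<Sum>x\<in>UNIV. \<bar>\<nu> x * K x y\<bar>)" by (rule sum_abs)
    also have "\<dots> = (\<Sum>x\<in>UNIV. a x * K x y)" using K0 by (simp add: a_def abs_mult)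
    finally show ?thesis .
  qed
  have "(\<Sum>y\<in>UNIV. (\<Sum>x\<in>UNIV. a x * K x y)) = (\<Sum>x\<in>UNIV. a x * (\<Sum>y\<in>UNIV. K x y))"
    by (subst sum.swap) (simp add: sum_distrib_left)
  also have "\<dots> = (\<Sum>y\<in>UNIV. a y)" using K1 by simp
  finally have "(\<Sum>y\<in>UNIV. (\<Sum>x\<in>UNIV. a x * K x y) - a y) = 0" by (simp add: sum_subtractf)
  then have ainv: "(\<Sum>x\<in>UNIV. a x * K x y) = a y" for y
    using ge by (subst (asm) sum_nonneg_eq_0_iff) auto
  define wp where "wp x = (a x + \<nu> x) / 2" for x
  define wm where "wm x = (a x - \<nu> x) / 2" for x
  have "\<exists>c. \<forall>x. wp x = c * \<mu> x"
  proof (rule nonneg_inv_multiple[OF uniq])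
    show "0 \<le> wp x" for x unfolding wp_def a_def by simp
    show "(\<Sum>x\<in>UNIV. wp x * K x y) = wp y" for y
      using ainv[of y] inv[of y] unfolding wp_def
      by (simp add: add_divide_distrib distrib_right sum.distrib sum_divide_distrib[symmetric])
  qed
  then obtain c1 where c1: "\<forall>x. wp x = c1 * \<mu> x" by blast
  have "\<exists>c. \<forall>x. wm x = c * \<mu> x"
  proof (rule nonneg_inv_multiple[OF uniq])
    show "0 \<le> wm x" for x unfolding wm_def a_def by simp
    show "(\<Sum>x\<in>UNIV. wm x * K x y) = wm y" for y
      using ainv[of y] inv[of y] unfolding wm_def
      by (simp add: diff_divide_distrib left_diff_distrib sum_subtractf sum_divide_distrib[symmetric])
  qed
  then obtain c2 where c2: "\<forall>x. wm x = c2 * \<mu> x" by blast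
  have "\<forall>x. \<nu> x = (c1 - c2) * \<mu> x"
  proof
    fix x have "\<nu> x = wp x - wm x" unfolding wp_def wm_def by (simp add: field_simps)
    then show "\<nu> x = (c1 - c2) * \<mu> x" using c1 c2 by (simp add: left_diff_distrib)
  qed
  then show ?thesis by blast
qed

lemma poisson_exists:
  fixes K :: "'s::finite \<Rightarrow> 's \<Rightarrow> real"
  assumes stoch: "stochastic_matrix K" and stat: "stationary K \<mu>"
    and uniq: "\<forall>\<nu>. stationary K \<nu> \<longrightarrow> \<nu> = \<mu>"
    and f0: "(\<Sum>x\<in>UNIV. \<mu> x * f x) = 0"
  shows "\<exists>g. \<forall>x. g x - (\<Sum>y\<in>UNIV. K x y * g y) = f x"
proof -
  define L :: "real^'s \<Rightarrow> real^'s" where "L v = (\<chi> x. v$x - (\<Sum>y\<in>UNIV. K x y * v$y))" for v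
  have lin: "linear L"
    by (rule linearI) (simp_all add: L_def vec_eq_iff algebra_simps sum.distrib sum_distrib_left)
  define fv :: "real^'s" where "fv = (\<chi> x. f x)"
  define mv :: "real^'s" where "mv = (\<chi> x. \<mu> x)"
  obtain y z where y: "y \<in> span (range L)" and z: "\<And>w. w \<in> span (range L) \<Longrightarrow> orthogonal z w"
    and fyz: "fv = y + z"
    using orthogonal_subspace_decomp_exists by blast
  have zinv: "(\<Sum>x\<in>UNIV. z$x * K x yy) = z$yy" for yy
  proof -
    have "orthogonal z (L (axis yy 1))" by (rule z) (simp add: span_base)
    then have "0 = (\<Sum>x\<in>UNIV. z$x * ((if x = yy then 1 else 0) - (\<Sum>y'\<in>UNIV. K x y' * (if y' = yy then 1 else 0))))"
      by (simp add: orthogonal_def inner_vec_def L_def axis_def)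
    also have "\<dots> = z$yy - (\<Sum>x\<in>UNIV. z$x * K x yy)"
      by (simp add: right_diff_distrib sum_subtractf if_distrib[of "\<lambda>t. z$_ * t"] mult_ac if_distrib[of "\<lambda>t. K _ _ * t"] cong: if_cong)
    finally show ?thesis by simp
  qed
  obtain c where c: "\<forall>x. z$x = c * \<mu> x"
    using inv_multiple[OF stoch uniq, of "\<lambda>x. z$x"] zinv by blast
  have muL: "mv \<bullet> L v = 0" for v
  proof -
    have "mv \<bullet> L v = (\<Sum>x\<in>UNIV. \<mu> x * v$x) - (\<Sum>x\<in>UNIV. \<Sum>y\<in>UNIV. \<mu> x * K x y * v$y)"
      by (simp add: inner_vec_def L_def mv_def right_diff_distrib sum_subtractf sum_distrib_left mult.assoc)
    also have "(\<Sum>x\<in>UNIV. \<Sum>y\<in>UNIV. \<mu> x * K x y * v$y) = (\<Sum>y\<in>UNIV. (\<Sum>x\<in>UNIV. \<mu> x * K x y) * v$y)"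
      by (subst sum.swap) (simp add: sum_distrib_right)
    also have "\<dots> = (\<Sum>y\<in>UNIV. \<mu> y * v$y)" using stat unfolding stationary_def by simp
    finally show ?thesis by simp
  qed
  have "span (range L) \<subseteq> {w. mv \<bullet> w = 0}"
    by (rule span_minimal) (auto simp: muL subspace_hyperplane)
  with y have my: "mv \<bullet> y = 0" by blast
  have mf: "mv \<bullet> fv = 0" using f0 by (simp add: inner_vec_def mv_def fv_def)
  have "mv \<bullet> z = 0" using my mf fyz by (simp add: inner_add_right)
  then have "c * (\<Sum>x\<in>UNIV. \<mu> x * \<mu> x) = 0"
    using c by (simp add: inner_vec_def mv_def sum_distrib_left mult.commute mult.left_commute)
  moreover have "(\<Sum>x\<in>UNIV. \<mu> x * \<mu> x) > 0"
  proof -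
    have "(\<Sum>x\<in>UNIV. \<mu> x) = 1" using stat unfolding stationary_def prob_vector_def by simp
    then obtain x0 where "\<mu> x0 \<noteq> 0" by (metis (mono_tags) sum.neutral zero_neq_one)
    then have "0 < \<mu> x0 * \<mu> x0" by (metis not_real_square_gt_zero)
    also have "\<dots> \<le> (\<Sum>x\<in>UNIV. \<mu> x * \<mu> x)"
      by (rule member_le_sum) auto
    finally show ?thesis .
  qed
  ultimately have "c = 0" by simp
  then have "z = 0" using c by (simp add: vec_eq_iff)
  then have "fv \<in> span (range L)" using fyz y by simp
  moreover have "span (range L) = range L"
    by (rule span_eq_iff[THEN iffD2]) (rule linear_subspace_image[OF lin subspace_UNIV])
  ultimately obtain v where "L v = fv" by auto
  then have "\<forall>x. v$x - (\<Sum>y\<in>UNIV. K x y * v$y) = f x"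
    by (simp add: L_def fv_def vec_eq_iff)
  then show ?thesis by blast
qed


definition bern :: "('s \<Rightarrow> real) \<Rightarrow> 's \<Rightarrow> bool \<Rightarrow> real" where
  "bern p r b = (if b then p r else 1 - p r)"

definition Pf :: "('s \<Rightarrow> 's \<Rightarrow> real) \<Rightarrow> ('s \<Rightarrow> real) \<Rightarrow> ('s \<Rightarrow> real) \<Rightarrow> 's list \<Rightarrow> bool list \<Rightarrow> real" where
  "Pf K p \<eta> rs bs = \<eta> (rs ! 0) * (\<Prod>j<length rs - 1. K (rs ! j) (rs ! Suc j))
            * (\<Prod>j<length rs. bern p (rs ! j) (bs ! j))"

definition Lt :: "nat \<Rightarrow> ('s list \<times> bool list) set" where
  "Lt t = {rs. length rs = t} \<times> {bs. length bs = t}"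

definition Ef :: "('s::finite \<Rightarrow> 's \<Rightarrow> real) \<Rightarrow> ('s \<Rightarrow> real) \<Rightarrow> ('s \<Rightarrow> real) \<Rightarrow> nat
     \<Rightarrow> ('s list \<Rightarrow> bool list \<Rightarrow> real) \<Rightarrow> real" where
  "Ef K p \<eta> t h = (\<Sum>v\<in>Lt t. h (fst v) (snd v) * Pf K p \<eta> (fst v) (snd v))"

lemma finite_Lt[simp]: "finite (Lt t :: ('s::finite list \<times> bool list) set)"
  unfolding Lt_def by (intro finite_cartesian_product finite_list_length)

lemma Pf_snoc:
  assumes "length rs = Suc t" "length bs = Suc t"
  shows "Pf K p \<eta> (rs @ [r]) (bs @ [b]) = Pf K p \<eta> rs bs * K (last rs) r * bern p r b"
proof -
  have "rs \<noteq> []" using assms by auto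
  then have l: "last rs = rs ! t" using assms by (simp add: last_conv_nth)
  have 1: "(\<Prod>j<Suc t. K ((rs @ [r]) ! j) ((rs @ [r]) ! Suc j)) = (\<Prod>j<t. K (rs ! j) (rs ! Suc j)) * K (rs ! t) r"
    using assms by (simp add: nth_append)
  have 2: "(\<Prod>j<Suc (Suc t). bern p ((rs @ [r]) ! j) ((bs @ [b]) ! j)) = (\<Prod>j<Suc t. bern p (rs ! j) (bs ! j)) * bern p r b"
  proof -
    have "(\<Prod>j<Suc t. bern p ((rs @ [r]) ! j) ((bs @ [b]) ! j)) = (\<Prod>j<Suc t. bern p (rs ! j) (bs ! j))"
      using assms by (intro prod.cong) (auto simp: nth_append)
    moreover have "(\<Prod>j<Suc (Suc t). bern p ((rs @ [r]) ! j) ((bs @ [b]) ! j)) = (\<Prod>j<Suc t. bern p ((rs @ [r]) ! j) ((bs @ [b]) ! j)) * bern p ((rs @ [r]) ! Suc t) ((bs @ [b]) ! Suc t)"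
      by (rule prod.lessThan_Suc)
    ultimately show ?thesis using assms by (simp add: nth_append)
  qed
  show ?thesis using assms 1 2 l unfolding Pf_def by (simp add: nth_append)
qed

lemma Lt_Suc: "Lt (Suc t) = (\<lambda>(v, r, b). (fst v @ [r], snd v @ [b])) ` (Lt t \<times> UNIV)"
proof (rule set_eqI, rule iffI)
  fix x assume "x \<in> Lt (Suc t)"
  then obtain rs bs where x: "x = (rs, bs)" "length rs = Suc t" "length bs = Suc t" unfolding Lt_def by auto
  then obtain rs' r where rs: "rs = rs' @ [r]" by (metis append_butlast_last_id list.size(3) nat.distinct(1))
  obtain bs' b where bs: "bs = bs' @ [b]" using x by (metis append_butlast_last_id list.size(3) nat.distinct(1))
  show "x \<in> (\<lambda>(v, r, b). (fst v @ [r], snd v @ [b])) ` (Lt t \<times> UNIV)"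
    using x rs bs by (intro image_eqI[of _ _ "((rs', bs'), r, b)"]) (auto simp: Lt_def)
qed (auto simp: Lt_def)

lemma sum_UNIV_pair: "(\<Sum>x\<in>(UNIV::('a::finite \<times> 'b::finite) set). f x) = (\<Sum>a\<in>UNIV. \<Sum>b\<in>UNIV. f (a,b))"
  by (simp add: sum.cartesian_product)

lemma Ef_Suc:
  fixes K :: "'s::finite \<Rightarrow> 's \<Rightarrow> real"
  assumes "t \<ge> 1"
  shows "Ef K p \<eta> (Suc t) h = Ef K p \<eta> t (\<lambda>rs bs. \<Sum>r\<in>UNIV. \<Sum>b\<in>UNIV. K (last rs) r * bern p r b * h (rs @ [r]) (bs @ [b]))"
proof -
  have inj: "inj_on (\<lambda>(v, r, b). (fst v @ [r], snd v @ [b])) (Lt t \<times> (UNIV :: ('s \<times> bool) set))"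
    by (auto simp: inj_on_def)
  have "Ef K p \<eta> (Suc t) h = (\<Sum>x\<in>Lt t \<times> UNIV. (\<lambda>(v, r::'s, b::bool). h (fst v @ [r]) (snd v @ [b]) * Pf K p \<eta> (fst v @ [r]) (snd v @ [b])) x)"
    unfolding Ef_def Lt_Suc by (subst sum.reindex[OF inj]) (simp add: case_prod_beta)
  also have "\<dots> = (\<Sum>v\<in>Lt t. \<Sum>rb\<in>UNIV. (\<lambda>(v, r::'s, b::bool). h (fst v @ [r]) (snd v @ [b]) * Pf K p \<eta> (fst v @ [r]) (snd v @ [b])) (v, rb))"
    by (subst sum.cartesian_product) (simp add: split_def)
  also have "\<dots> = (\<Sum>v\<in>Lt t. (\<Sum>r\<in>UNIV. \<Sum>b\<in>UNIV. K (last (fst v)) r * bern p r b * h (fst v @ [r]) (snd v @ [b])) * Pf K p \<eta> (fst v) (snd v))"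
  proof (rule sum.cong[OF refl])
    fix v :: "'s list \<times> bool list" assume v: "v \<in> Lt t"
    obtain t' where t': "t = Suc t'" using assms by (cases t) auto
    have pf: "Pf K p \<eta> (fst v @ [r]) (snd v @ [b]) = Pf K p \<eta> (fst v) (snd v) * K (last (fst v)) r * bern p r b" for r :: 's and b
      using v t' by (intro Pf_snoc) (auto simp: Lt_def)
    show "(\<Sum>rb\<in>UNIV. (\<lambda>(v, r::'s, b::bool). h (fst v @ [r]) (snd v @ [b]) * Pf K p \<eta> (fst v @ [r]) (snd v @ [b])) (v, rb))
      = (\<Sum>r\<in>UNIV. \<Sum>b\<in>UNIV. K (last (fst v)) r * bern p r b * h (fst v @ [r]) (snd v @ [b])) * Pf K p \<eta> (fst v) (snd v)"
      unfolding sum_UNIV_pair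
      by (simp add: pf sum_distrib_right sum_distrib_left mult_ac)
  qed
  finally show ?thesis unfolding Ef_def by simp
qed

lemma Pf_nonneg:
  assumes "\<And>x y. 0 \<le> K x y" "\<And>r. 0 \<le> p r \<and> p r \<le> 1" "\<And>x. 0 \<le> \<eta> x"
  shows "0 \<le> Pf K p \<eta> rs bs"
  unfolding Pf_def using assms by (intro mult_nonneg_nonneg prod_nonneg) (auto simp: bern_def)

lemma Ef_mono:
  assumes "\<And>rs bs. 0 \<le> Pf K p \<eta> rs bs"
    and "\<And>rs bs. length rs = t \<Longrightarrow> length bs = t \<Longrightarrow> h1 rs bs \<le> h2 rs bs"
  shows "Ef K p \<eta> t h1 \<le> Ef K p \<eta> t h2"
  unfolding Ef_def using assms by (intro sum_mono mult_right_mono) (auto simp: Lt_def)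

lemma Ef_add: "Ef K p \<eta> t (\<lambda>rs bs. h1 rs bs + h2 rs bs) = Ef K p \<eta> t h1 + Ef K p \<eta> t h2"
  unfolding Ef_def by (simp add: distrib_right sum.distrib)

lemma Ef_cmult: "Ef K p \<eta> t (\<lambda>rs bs. c * h rs bs) = c * Ef K p \<eta> t h"
  unfolding Ef_def by (simp add: sum_distrib_left mult.assoc)


locale mc =
  fixes K :: "'s::finite \<Rightarrow> 's \<Rightarrow> real" and p :: "'s \<Rightarrow> real" and \<eta> :: "'s \<Rightarrow> real"
    and M :: "'a measure" and R :: "nat \<Rightarrow> 'a \<Rightarrow> 's" and \<xi> :: "nat \<Rightarrow> 'a \<Rightarrow> bool"
  assumes stoch: "stochastic_matrix K" and pb: "\<forall>r. 0 < p r \<and> p r < 1"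
    and eta: "prob_vector \<eta>" and law: "has_law K p \<eta> M R \<xi>"
begin

definition Rs :: "nat \<Rightarrow> 'a \<Rightarrow> 's list" where "Rs t \<omega> = map (\<lambda>j. R (Suc j) \<omega>) [0..<t]"
definition Bs :: "nat \<Rightarrow> 'a \<Rightarrow> bool list" where "Bs t \<omega> = map (\<lambda>j. \<xi> (Suc j) \<omega>) [0..<t]"

lemma PS: "prob_space M" using law unfolding has_law_def by simp

lemma Pf_nn: "0 \<le> Pf K p \<eta> rs bs"
  using stoch pb eta unfolding stochastic_matrix_def prob_vector_def
  by (intro Pf_nonneg) (auto simp: less_imp_le)

lemma set_R: "{\<omega> \<in> space M. R j \<omega> = r} \<in> sets M"
proof -
  have "R j \<in> measurable M (count_space UNIV)" using law unfolding has_law_def by simp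
  then have "R j -` {r} \<inter> space M \<in> sets M" by (rule measurable_sets) simp
  moreover have "R j -` {r} \<inter> space M = {\<omega> \<in> space M. R j \<omega> = r}" by auto
  ultimately show ?thesis by simp
qed

lemma set_xi: "{\<omega> \<in> space M. \<xi> j \<omega> = b} \<in> sets M"
proof -
  have "\<xi> j \<in> measurable M (count_space UNIV)" using law unfolding has_law_def by simp
  then have "\<xi> j -` {b} \<inter> space M \<in> sets M" by (rule measurable_sets) simp
  moreover have "\<xi> j -` {b} \<inter> space M = {\<omega> \<in> space M. \<xi> j \<omega> = b}" by auto
  ultimately show ?thesis by simp
qed

lemma Rs_eq: "length rs = t \<Longrightarrow> (Rs t \<omega> = rs) = (\<forall>j<t. R (Suc j) \<omega> = rs ! j)"
  unfolding Rs_def list_eq_iff_nth_eq by force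

lemma Bs_eq: "length bs = t \<Longrightarrow> (Bs t \<omega> = bs) = (\<forall>j<t. \<xi> (Suc j) \<omega> = bs ! j)"
  unfolding Bs_def list_eq_iff_nth_eq by force

lemma length_Rs[simp]: "length (Rs t \<omega>) = t" by (simp add: Rs_def)
lemma length_Bs[simp]: "length (Bs t \<omega>) = t" by (simp add: Bs_def)

lemma cyl_eq:
  assumes "v \<in> Lt t"
  shows "{\<omega> \<in> space M. (Rs t \<omega>, Bs t \<omega>) = v}
       = {\<omega> \<in> space M. \<forall>j<t. R (Suc j) \<omega> = fst v ! j \<and> \<xi> (Suc j) \<omega> = snd v ! j}"
proof -
  obtain rs bs where v: "v = (rs, bs)" "length rs = t" "length bs = t" using assms by (auto simp: Lt_def)
  have "(Rs t \<omega>, Bs t \<omega>) = v \<longleftrightarrow> (\<forall>j<t. R (Suc j) \<omega> = fst v ! j \<and> \<xi> (Suc j) \<omega> = snd v ! j)" for \<omega>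
    using v Rs_eq[of rs t \<omega>] Bs_eq[of bs t \<omega>] by auto
  then show ?thesis by blast
qed

lemma cyl_sets: "{\<omega> \<in> space M. (Rs t \<omega>, Bs t \<omega>) = v} \<in> sets M"
proof (cases "v \<in> Lt t")
  case True
  have "{\<omega> \<in> space M. \<forall>j\<in>{..<t}. R (Suc j) \<omega> = fst v ! j \<and> \<xi> (Suc j) \<omega> = snd v ! j} \<in> sets M"
  proof (rule sets.sets_Collect_finite_All)
    fix j assume "j \<in> {..<t}"
    show "{\<omega> \<in> space M. R (Suc j) \<omega> = fst v ! j \<and> \<xi> (Suc j) \<omega> = snd v ! j} \<in> sets M"
    proof -
      have "{\<omega> \<in> space M. R (Suc j) \<omega> = fst v ! j \<and> \<xi> (Suc j) \<omega> = snd v ! j}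
          = {\<omega> \<in> space M. R (Suc j) \<omega> = fst v ! j} \<inter> {\<omega> \<in> space M. \<xi> (Suc j) \<omega> = snd v ! j}" by auto
      then show ?thesis using sets.Int[OF set_R set_xi] by simp
    qed
  qed simp
  moreover have "{\<omega> \<in> space M. \<forall>j\<in>{..<t}. R (Suc j) \<omega> = fst v ! j \<and> \<xi> (Suc j) \<omega> = snd v ! j}
     = {\<omega> \<in> space M. \<forall>j<t. R (Suc j) \<omega> = fst v ! j \<and> \<xi> (Suc j) \<omega> = snd v ! j}" by auto
  ultimately show ?thesis unfolding cyl_eq[OF True] by (simp only:)
next
  case False
  have "(Rs t \<omega>, Bs t \<omega>) \<in> Lt t" for \<omega> by (simp add: Lt_def)
  then have "{\<omega> \<in> space M. (Rs t \<omega>, Bs t \<omega>) = v} = {}"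
    using False by force
  then show ?thesis by (metis sets.empty_sets)
qed

lemma cyl_measure:
  assumes "t \<ge> 1" "v \<in> Lt t"
  shows "measure M {\<omega> \<in> space M. (Rs t \<omega>, Bs t \<omega>) = v} = Pf K p \<eta> (fst v) (snd v)"
proof -
  obtain rs bs where v: "v = (rs, bs)" "length rs = t" "length bs = t" using assms by (auto simp: Lt_def)
  have H: "\<forall>m rs bs. 1 \<le> m \<longrightarrow> length rs = m \<longrightarrow> length bs = m \<longrightarrow>
        measure M {\<omega> \<in> space M. \<forall>j<m. R (Suc j) \<omega> = rs ! j \<and> \<xi> (Suc j) \<omega> = bs ! j}
        = \<eta> (rs ! 0) * (\<Prod>j<m - 1. K (rs ! j) (rs ! Suc j))
            * (\<Prod>j<m. if bs ! j then p (rs ! j) else 1 - p (rs ! j))"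
    using law unfolding has_law_def by blast
  have "measure M {\<omega> \<in> space M. \<forall>j<t. R (Suc j) \<omega> = rs ! j \<and> \<xi> (Suc j) \<omega> = bs ! j}
        = \<eta> (rs ! 0) * (\<Prod>j<t - 1. K (rs ! j) (rs ! Suc j))
            * (\<Prod>j<t. if bs ! j then p (rs ! j) else 1 - p (rs ! j))"
    using H assms v by blast
  then show ?thesis using cyl_eq[OF assms(2)] v by (simp add: Pf_def bern_def)
qed

lemma ev_eq: "{\<omega> \<in> space M. Q (Rs t \<omega>) (Bs t \<omega>)}
   = (\<Union>v\<in>{v\<in>Lt t. Q (fst v) (snd v)}. {\<omega> \<in> space M. (Rs t \<omega>, Bs t \<omega>) = v})"
proof (rule set_eqI, rule iffI)
  fix x assume x: "x \<in> {\<omega> \<in> space M. Q (Rs t \<omega>) (Bs t \<omega>)}"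
  have "(Rs t x, Bs t x) \<in> {v\<in>Lt t. Q (fst v) (snd v)}" using x by (simp add: Lt_def Rs_def Bs_def)
  then show "x \<in> (\<Union>v\<in>{v\<in>Lt t. Q (fst v) (snd v)}. {\<omega> \<in> space M. (Rs t \<omega>, Bs t \<omega>) = v})"
    using x by (intro UN_I[of "(Rs t x, Bs t x)"]) auto
qed auto

lemma ev_sets: "{\<omega> \<in> space M. Q (Rs t \<omega>) (Bs t \<omega>)} \<in> sets M"
  unfolding ev_eq by (rule sets.finite_UN) (simp, rule cyl_sets)

lemma ev_measure:
  assumes "t \<ge> 1"
  shows "measure M {\<omega> \<in> space M. Q (Rs t \<omega>) (Bs t \<omega>)} = Ef K p \<eta> t (\<lambda>rs bs. if Q rs bs then 1 else 0)"
proof -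
  interpret prob_space M by (rule PS)
  have "measure M {\<omega> \<in> space M. Q (Rs t \<omega>) (Bs t \<omega>)}
      = (\<Sum>v\<in>{v\<in>Lt t. Q (fst v) (snd v)}. measure M {\<omega> \<in> space M. (Rs t \<omega>, Bs t \<omega>) = v})"
    unfolding ev_eq
    by (rule finite_measure_finite_Union) (simp, rule image_subsetI, rule cyl_sets, auto simp: disjoint_family_on_def)
  also have "\<dots> = (\<Sum>v\<in>{v\<in>Lt t. Q (fst v) (snd v)}. Pf K p \<eta> (fst v) (snd v))"
    using assms by (intro sum.cong) (auto simp: cyl_measure)
  also have "\<dots> = Ef K p \<eta> t (\<lambda>rs bs. if Q rs bs then 1 else 0)"
    unfolding Ef_def
  proof (subst sum.inter_filter)
    show "(\<Sum>v\<in>Lt t. if Q (fst v) (snd v) then Pf K p \<eta> (fst v) (snd v) else 0)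
        = (\<Sum>v\<in>Lt t. (if Q (fst v) (snd v) then 1 else 0) * Pf K p \<eta> (fst v) (snd v))"
      by (rule sum.cong) simp_all
  qed simp
  finally show ?thesis .
qed

lemma Ef_one:
  assumes "t \<ge> 1"
  shows "Ef K p \<eta> t (\<lambda>_ _. 1) = 1"
proof -
  interpret prob_space M by (rule PS)
  have "measure M {\<omega> \<in> space M. True} = 1" by (simp add: prob_space)
  then show ?thesis using ev_measure[OF assms, of "\<lambda>_ _. True"] by simp
qed

lemma Ef_mono':
  assumes "\<And>rs bs. length rs = t \<Longrightarrow> length bs = t \<Longrightarrow> h1 rs bs \<le> h2 rs bs"
  shows "Ef K p \<eta> t h1 \<le> Ef K p \<eta> t h2"
  by (rule Ef_mono[OF Pf_nn assms])

end


definition bv :: "bool \<Rightarrow> real" where "bv b = (if b then 1 else 0)"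
definition Kg :: "('s::finite \<Rightarrow> 's \<Rightarrow> real) \<Rightarrow> ('s \<Rightarrow> real) \<Rightarrow> 's \<Rightarrow> real" where
  "Kg K g x = (\<Sum>y\<in>UNIV. K x y * g y)"
definition Dl :: "('s::finite \<Rightarrow> 's \<Rightarrow> real) \<Rightarrow> ('s \<Rightarrow> real) \<Rightarrow> ('s \<Rightarrow> real) \<Rightarrow> 's list \<Rightarrow> bool list \<Rightarrow> nat \<Rightarrow> real" where
  "Dl K p g rs bs j = bv (bs ! j) - p (rs ! j) + (if j = 0 then 0 else g (rs ! j) - Kg K g (rs ! (j - 1)))"
definition Ml :: "('s::finite \<Rightarrow> 's \<Rightarrow> real) \<Rightarrow> ('s \<Rightarrow> real) \<Rightarrow> ('s \<Rightarrow> real) \<Rightarrow> 's list \<Rightarrow> bool list \<Rightarrow> real" where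
  "Ml K p g rs bs = (\<Sum>j<length rs. Dl K p g rs bs j)"
definition Sl :: "'s list \<Rightarrow> bool list \<Rightarrow> real" where
  "Sl rs bs = (\<Sum>j<length rs. bv (bs ! j)) - real (length rs) / 2"

lemma Ml_snoc:
  assumes "length bs = length rs" "rs \<noteq> []"
  shows "Ml K p g (rs @ [r]) (bs @ [b]) = Ml K p g rs bs + (bv b - p r + g r - Kg K g (last rs))"
proof -
  have "(\<Sum>j<length rs. Dl K p g (rs @ [r]) (bs @ [b]) j) = (\<Sum>j<length rs. Dl K p g rs bs j)"
    using assms by (intro sum.cong) (auto simp: Dl_def nth_append)
  moreover have "Dl K p g (rs @ [r]) (bs @ [b]) (length rs) = bv b - p r + g r - Kg K g (last rs)"
    using assms by (simp add: Dl_def nth_append last_conv_nth)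
  ultimately show ?thesis unfolding Ml_def by simp
qed

lemma Sl_snoc:
  assumes "length bs = length rs"
  shows "Sl (rs @ [r]) (bs @ [b]) = Sl rs bs + bv b - 1/2"
proof -
  have "(\<Sum>j<length rs. bv ((bs @ [b]) ! j)) = (\<Sum>j<length rs. bv (bs ! j))"
    using assms by (intro sum.cong) (auto simp: nth_append)
  then show ?thesis using assms unfolding Sl_def by (simp add: field_simps nth_append)
qed

lemma Sl_Ml:
  assumes pois: "\<And>x. g x - Kg K g x = p x - 1/2"
  shows "length rs = Suc n \<Longrightarrow> length bs = Suc n \<Longrightarrow> Sl rs bs = Ml K p g rs bs + g (rs ! 0) - Kg K g (last rs)"
proof (induction n arbitrary: rs bs)
  case 0
  then obtain r b where "rs = [r]" "bs = [b]" by (metis length_0_conv length_Suc_conv)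
  then show ?case using pois[of r] by (simp add: Sl_def Ml_def Dl_def)
next
  case (Suc n)
  obtain rs' r where rs: "rs = rs' @ [r]" using Suc.prems by (metis append_butlast_last_id list.size(3) nat.distinct(1))
  obtain bs' b where bs: "bs = bs' @ [b]" using Suc.prems by (metis append_butlast_last_id list.size(3) nat.distinct(1))
  have l: "length rs' = Suc n" "length bs' = Suc n" using Suc.prems rs bs by auto
  then have ne: "rs' \<noteq> []" by auto
  have "Sl rs bs = Sl rs' bs' + bv b - 1/2" unfolding rs bs by (rule Sl_snoc) (simp add: l)
  also have "\<dots> = Ml K p g rs' bs' + g (rs' ! 0) - Kg K g (last rs') + bv b - 1/2"
    using Suc.IH[OF l] by simp
  also have "\<dots> = Ml K p g rs bs + g (rs ! 0) - Kg K g (last rs)"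
    unfolding rs bs using Ml_snoc[of bs' rs' K p g r b] l ne pois[of r] by (simp add: nth_append)
  finally show ?case .
qed

lemma step_ineq:
  fixes x d c :: real
  assumes "\<bar>d\<bar> \<le> c"
  shows "(x + d) ^ (2*k+2) \<le> x ^ (2*k+2) + (2*k+2) * x ^ (2*k+1) * d + (1 + c) ^ (2*k+2) * (1 + x ^ (2*k))"
proof -
  define n where "n = 2*k+2"
  have c0: "0 \<le> c" using assms by linarith
  have pw: "\<bar>x\<bar> ^ i \<le> 1 + x ^ (2*k)" if "i \<le> 2*k" for i
  proof (cases "\<bar>x\<bar> \<le> 1")
    case True
    then have "\<bar>x\<bar> ^ i \<le> 1" by (simp add: power_le_one)
    moreover have "0 \<le> x ^ (2*k)" by (simp add: zero_le_power_eq)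
    ultimately show ?thesis by linarith
  next
    case False
    then have "\<bar>x\<bar> ^ i \<le> \<bar>x\<bar> ^ (2*k)" using that by (intro power_increasing) auto
    also have "\<dots> = x ^ (2*k)" by (simp add: power_even_abs)
    finally show ?thesis by simp
  qed
  have bin: "(x + d) ^ n = (\<Sum>i\<le>n. of_nat (n choose i) * d ^ i * x ^ (n - i))"
    by (subst add.commute) (rule binomial_ring)
  have split: "{..n} = {0, 1} \<union> {2..n}" unfolding n_def by auto
  have "(\<Sum>i\<le>n. of_nat (n choose i) * d ^ i * x ^ (n - i))
      = x ^ n + of_nat n * d * x ^ (n - 1) + (\<Sum>i\<in>{2..n}. of_nat (n choose i) * d ^ i * x ^ (n - i))"
    unfolding split by (subst sum.union_disjoint) (auto simp: n_def)
  moreover have "(\<Sum>i\<in>{2..n}. of_nat (n choose i) * d ^ i * x ^ (n - i)) \<le> (\<Sum>i\<in>{2..n}. of_nat (n choose i) * c ^ i * (1 + x ^ (2*k)))"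
  proof (rule sum_mono)
    fix i assume i: "i \<in> {2..n}"
    have "of_nat (n choose i) * d ^ i * x ^ (n - i) \<le> \<bar>of_nat (n choose i) * d ^ i * x ^ (n - i)\<bar>" by simp
    also have "\<dots> = of_nat (n choose i) * \<bar>d\<bar> ^ i * \<bar>x\<bar> ^ (n - i)" by (simp add: abs_mult power_abs)
    also have "\<dots> \<le> of_nat (n choose i) * c ^ i * (1 + x ^ (2*k))"
      using i assms pw[of "n - i"] unfolding n_def
      by (intro mult_mono mult_left_mono power_mono) (auto simp: zero_le_mult_iff)
    finally show "of_nat (n choose i) * d ^ i * x ^ (n - i) \<le> of_nat (n choose i) * c ^ i * (1 + x ^ (2*k))" .
  qed
  moreover have "(\<Sum>i\<in>{2..n}. of_nat (n choose i) * c ^ i * (1 + x ^ (2*k))) \<le> (1 + c) ^ n * (1 + x ^ (2*k))"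
  proof -
    have "(\<Sum>i\<in>{2..n}. of_nat (n choose i) * c ^ i) \<le> (\<Sum>i\<le>n. of_nat (n choose i) * c ^ i)"
      using c0 by (intro sum_mono2) auto
    also have "\<dots> = (1 + c) ^ n" using binomial_ring[of c 1 n] by (simp add: add.commute)
    finally have "(\<Sum>i\<in>{2..n}. of_nat (n choose i) * c ^ i) * (1 + x ^ (2*k)) \<le> (1 + c) ^ n * (1 + x ^ (2*k))"
      by (rule mult_right_mono) (simp add: zero_le_power_eq add_nonneg_nonneg)
    then show ?thesis by (simp add: sum_distrib_right)
  qed
  ultimately have "(x + d) ^ n \<le> x ^ n + of_nat n * d * x ^ (n - 1) + (1 + c) ^ n * (1 + x ^ (2*k))"
    unfolding bin by linarith
  then show ?thesis unfolding n_def by (simp add: mult_ac add.commute)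
qed


fun Cm :: "real \<Rightarrow> nat \<Rightarrow> real" where
  "Cm c 0 = 1"
| "Cm c (Suc k) = 1 + (1 + c) ^ (2*k+2) * (1 + Cm c k)"

lemma Cm_ge1: "0 \<le> c \<Longrightarrow> 1 \<le> Cm c k"
  by (induction k) (auto simp: add_nonneg_nonneg)

lemma sum_bool: "(\<Sum>b\<in>UNIV. f b) = f True + (f False :: real)"
  by (simp add: UNIV_bool)

lemma Ef_const: "Ef K p \<eta> t (\<lambda>_ _. c) = c * Ef K p \<eta> t (\<lambda>_ _. 1)"
  unfolding Ef_def by (simp add: sum_distrib_left)

lemma pow10_le: fixes u v :: real assumes "0 \<le> u" "0 \<le> v"
  shows "(u + v) ^ 10 \<le> 2 ^ 10 * (u ^ 10 + v ^ 10)"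
proof -
  have "(u + v) ^ 10 \<le> (2 * max u v) ^ 10" using assms by (intro power_mono) auto
  also have "\<dots> = 2 ^ 10 * max u v ^ 10" by (simp add: power_mult_distrib)
  also have "max u v ^ 10 \<le> u ^ 10 + v ^ 10" using assms by (cases "u \<le> v") (auto simp: max_def)
  finally show ?thesis by simp
qed

locale mcg = mc K p \<eta> M R \<xi>
  for K :: "'s::finite \<Rightarrow> 's \<Rightarrow> real" and p \<eta> and M :: "'a measure" and R \<xi> +
  fixes g :: "'s \<Rightarrow> real"
  assumes pois: "\<And>x. g x - Kg K g x = p x - 1/2"
begin

definition Gb where "Gb = (\<Sum>x\<in>UNIV. \<bar>g x\<bar>)"
definition c0 where "c0 = 1 + 2 * Gb"
definition mom where "mom k t = Ef K p \<eta> t (\<lambda>rs bs. Ml K p g rs bs ^ (2*k))"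
definition CS where "CS = 2 ^ 10 * (Cm c0 5 + (2 * Gb) ^ 10)"

lemma K0: "0 \<le> K x y" and K1: "(\<Sum>y\<in>UNIV. K x y) = 1"
  using stoch unfolding stochastic_matrix_def by auto

lemma Gb0: "0 \<le> Gb" unfolding Gb_def by (simp add: sum_nonneg)
lemma c00: "0 \<le> c0" using Gb0 unfolding c0_def by simp

lemma g_bound: "\<bar>g x\<bar> \<le> Gb"
  unfolding Gb_def by (rule member_le_sum[of x UNIV "\<lambda>x. \<bar>g x\<bar>"]) auto

lemma Kg_bound: "\<bar>Kg K g x\<bar> \<le> Gb"
proof -
  have "\<bar>Kg K g x\<bar> \<le> (\<Sum>y\<in>UNIV. \<bar>K x y * g y\<bar>)" unfolding Kg_def by (rule sum_abs)
  also have "\<dots> \<le> (\<Sum>y\<in>UNIV. K x y * Gb)"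
    by (intro sum_mono) (simp add: abs_mult K0 g_bound mult_left_mono)
  also have "\<dots> = Gb" by (simp add: sum_distrib_right[symmetric] K1)
  finally show ?thesis .
qed

lemma d_bound: "\<bar>bv b - p r + g r - Kg K g y\<bar> \<le> c0"
proof -
  have "\<bar>bv b - p r\<bar> \<le> 1" using pb by (auto simp: bv_def less_imp_le)
  then show ?thesis using g_bound[of r] Kg_bound[of y] unfolding c0_def by linarith
qed

lemma wsum:
  "(\<Sum>r\<in>UNIV. \<Sum>b\<in>UNIV. K y r * bern p r b * (x + (bv b - p r + g r - Kg K g y)) ^ (2*k+2))
    \<le> x ^ (2*k+2) + (1 + c0) ^ (2*k+2) * (1 + x ^ (2*k))"
proof -
  define B where "B = (1 + c0) ^ (2*k+2) * (1 + x ^ (2*k))"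
  define F where "F r b = x ^ (2*k+2) + (2 * real k + 2) * x ^ (2*k+1) * (bv b - p r + g r - Kg K g y) + B" for r b
  have wnn: "0 \<le> K y r * bern p r b" for r b using K0 pb by (auto simp: bern_def less_imp_le)
  have "(\<Sum>r\<in>UNIV. \<Sum>b\<in>UNIV. K y r * bern p r b * (x + (bv b - p r + g r - Kg K g y)) ^ (2*k+2))
     \<le> (\<Sum>r\<in>UNIV. \<Sum>b\<in>UNIV. K y r * bern p r b * F r b)"
    unfolding F_def B_def
    by (intro sum_mono mult_left_mono wnn step_ineq[OF d_bound])
  also have "\<dots> = (\<Sum>r\<in>UNIV. K y r * (x ^ (2*k+2) + B + (2 * real k + 2) * x ^ (2*k+1) * (g r - Kg K g y)))"
    using pb unfolding F_def sum_bool by (intro sum.cong) (auto simp: bern_def bv_def algebra_simps)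
  also have "\<dots> = (\<Sum>r\<in>UNIV. (x ^ (2*k+2) + B) * K y r + (2 * real k + 2) * x ^ (2*k+1) * (K y r * g r) - ((2 * real k + 2) * x ^ (2*k+1) * Kg K g y) * K y r)"
    by (intro sum.cong) (simp_all add: algebra_simps)
  also have "\<dots> = (x ^ (2*k+2) + B) * (\<Sum>r\<in>UNIV. K y r) + (2 * real k + 2) * x ^ (2*k+1) * (\<Sum>r\<in>UNIV. K y r * g r) - ((2 * real k + 2) * x ^ (2*k+1) * Kg K g y) * (\<Sum>r\<in>UNIV. K y r)"
    by (simp only: sum.distrib sum_subtractf sum_distrib_left)
  also have "\<dots> = x ^ (2*k+2) + B" by (simp add: K1 Kg_def[symmetric])
  finally show ?thesis unfolding B_def .
qed

lemma Ml_one: "length rs = 1 \<Longrightarrow> Ml K p g rs bs = bv (bs ! 0) - p (rs ! 0)"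
  by (simp add: Ml_def Dl_def)

lemma mom_zero: "t \<ge> 1 \<Longrightarrow> mom 0 t = 1"
  unfolding mom_def by (simp add: Ef_one)

lemma mom_one: "mom k 1 \<le> 1"
proof -
  have "mom k 1 \<le> Ef K p \<eta> 1 (\<lambda>_ _. 1)"
    unfolding mom_def
  proof (rule Ef_mono')
    fix rs :: "'s list" and bs :: "bool list" assume "length rs = 1" "length bs = 1"
    then have "\<bar>Ml K p g rs bs\<bar> \<le> 1" using pb by (auto simp: Ml_one bv_def less_imp_le)
    then have "\<bar>Ml K p g rs bs\<bar> ^ (2*k) \<le> 1" by (simp add: power_le_one)
    then show "Ml K p g rs bs ^ (2*k) \<le> 1" by (simp add: power_even_abs)
  qed
  then show ?thesis by (simp add: Ef_one)
qed

lemma mom_step: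
  assumes "t \<ge> 1"
  shows "mom (Suc k) (Suc t) \<le> mom (Suc k) t + (1 + c0) ^ (2*k+2) * (1 + mom k t)"
proof -
  have "mom (Suc k) (Suc t) = Ef K p \<eta> t (\<lambda>rs bs. \<Sum>r\<in>UNIV. \<Sum>b\<in>UNIV. K (last rs) r * bern p r b * Ml K p g (rs @ [r]) (bs @ [b]) ^ (2*k+2))"
    unfolding mom_def by (simp add: Ef_Suc[OF assms])
  also have "\<dots> \<le> Ef K p \<eta> t (\<lambda>rs bs. Ml K p g rs bs ^ (2*k+2) + (1 + c0) ^ (2*k+2) * (1 + Ml K p g rs bs ^ (2*k)))"
  proof (rule Ef_mono')
    fix rs :: "'s list" and bs :: "bool list" assume l: "length rs = t" "length bs = t"
    then have ne: "rs \<noteq> []" using assms by auto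
    show "(\<Sum>r\<in>UNIV. \<Sum>b\<in>UNIV. K (last rs) r * bern p r b * Ml K p g (rs @ [r]) (bs @ [b]) ^ (2*k+2))
        \<le> Ml K p g rs bs ^ (2*k+2) + (1 + c0) ^ (2*k+2) * (1 + Ml K p g rs bs ^ (2*k))"
      using wsum[of "last rs" "Ml K p g rs bs" k] l ne by (simp add: Ml_snoc)
  qed
  also have "\<dots> = mom (Suc k) t + (1 + c0) ^ (2*k+2) * (1 + mom k t)"
  proof -
    have "Ef K p \<eta> t (\<lambda>rs bs. Ml K p g rs bs ^ (2*k+2) + (1 + c0) ^ (2*k+2) * (1 + Ml K p g rs bs ^ (2*k)))
      = Ef K p \<eta> t (\<lambda>rs bs. Ml K p g rs bs ^ (2*k+2)) + (1 + c0) ^ (2*k+2) * (Ef K p \<eta> t (\<lambda>rs bs. 1) + Ef K p \<eta> t (\<lambda>rs bs. Ml K p g rs bs ^ (2*k)))"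
      by (simp only: Ef_add Ef_cmult)
    then show ?thesis by (simp add: mom_def Ef_one[OF assms])
  qed
  finally show ?thesis .
qed

lemma mom_bound: "t \<ge> 1 \<Longrightarrow> mom k t \<le> Cm c0 k * real t ^ k"
proof (induction k arbitrary: t)
  case 0
  then show ?case by (simp add: mom_zero)
next
  case (Suc k)
  note outer = Suc.IH
  define B where "B = (1 + c0) ^ (2*k+2)"
  have B0: "0 \<le> B" unfolding B_def using c00 by simp
  show ?case using Suc.prems
  proof (induction t rule: nat_induct_at_least)
    case base
    then show ?case using mom_one[of "Suc k"] Cm_ge1[OF c00, of "Suc k"] by simp
  next
    case (Suc t)
    have t1: "1 \<le> real t" using Suc.hyps by simp
    have tk: "1 \<le> real t ^ k" using t1 by (simp add: one_le_power)
    have "mom (Suc k) (Suc t) \<le> mom (Suc k) t + B * (1 + mom k t)"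
      unfolding B_def using mom_step[OF Suc.hyps] .
    also have "\<dots> \<le> Cm c0 (Suc k) * real t ^ Suc k + B * (1 + Cm c0 k * real t ^ k)"
      using Suc.IH outer[OF Suc.hyps] B0 by (intro add_mono mult_left_mono) auto
    also have "B * (1 + Cm c0 k * real t ^ k) \<le> B * ((1 + Cm c0 k) * real t ^ k)"
      using tk B0 by (intro mult_left_mono) (auto simp: algebra_simps)
    also have "\<dots> \<le> Cm c0 (Suc k) * real t ^ k"
    proof -
      have h: "B * (1 + Cm c0 k) \<le> Cm c0 (Suc k)" by (simp add: B_def)
      show ?thesis using mult_right_mono[OF h, of "real t ^ k"] tk by (simp add: mult.assoc)
    qed
    finally have "mom (Suc k) (Suc t) \<le> Cm c0 (Suc k) * (real t ^ Suc k + real t ^ k)"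
      by (simp add: algebra_simps)
    also have "\<dots> \<le> Cm c0 (Suc k) * real (Suc t) ^ Suc k"
    proof (rule mult_left_mono)
      have a1: "real t ^ k \<le> (real t + 1) ^ k" by (intro power_mono) auto
      then have "real t * real t ^ k \<le> real t * (real t + 1) ^ k" by (intro mult_left_mono) auto
      moreover have "(real t + 1) * (real t + 1) ^ k = (real t + 1) ^ k + real t * (real t + 1) ^ k"
        by (simp add: algebra_simps)
      moreover have "real t ^ Suc k = real t * real t ^ k" by simp
      ultimately have "real t ^ Suc k + real t ^ k \<le> (real t + 1) * (real t + 1) ^ k"
        using a1 by linarith
      then show "real t ^ Suc k + real t ^ k \<le> real (Suc t) ^ Suc k" by (simp add: add.commute)
      show "0 \<le> Cm c0 (Suc k)" using Cm_ge1[OF c00, of "Suc k"] by simp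
    qed
    finally show ?case .
  qed
qed

lemma Sl_moment: "t \<ge> 1 \<Longrightarrow> Ef K p \<eta> t (\<lambda>rs bs. Sl rs bs ^ 10) \<le> CS * real t ^ 5"
proof -
  assume t: "t \<ge> 1"
  have "Ef K p \<eta> t (\<lambda>rs bs. Sl rs bs ^ 10) \<le> Ef K p \<eta> t (\<lambda>rs bs. 2 ^ 10 * (Ml K p g rs bs ^ 10 + (2 * Gb) ^ 10))"
  proof (rule Ef_mono')
    fix rs :: "'s list" and bs :: "bool list" assume l: "length rs = t" "length bs = t"
    obtain n where n: "t = Suc n" using t by (cases t) auto
    have "Sl rs bs = Ml K p g rs bs + g (rs ! 0) - Kg K g (last rs)"
      using Sl_Ml[OF pois, of rs n bs] l n by simp
    then have "\<bar>Sl rs bs\<bar> \<le> \<bar>Ml K p g rs bs\<bar> + 2 * Gb"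
      using g_bound[of "rs ! 0"] Kg_bound[of "last rs"] by linarith
    then have "\<bar>Sl rs bs\<bar> ^ 10 \<le> (\<bar>Ml K p g rs bs\<bar> + 2 * Gb) ^ 10" by (intro power_mono) auto
    also have "\<dots> \<le> 2 ^ 10 * (\<bar>Ml K p g rs bs\<bar> ^ 10 + (2 * Gb) ^ 10)" using Gb0 by (intro pow10_le) auto
    finally show "Sl rs bs ^ 10 \<le> 2 ^ 10 * (Ml K p g rs bs ^ 10 + (2 * Gb) ^ 10)"
      by (simp add: power_even_abs)
  qed
  also have "\<dots> = 2 ^ 10 * (mom 5 t + (2 * Gb) ^ 10)"
  proof -
    have "Ef K p \<eta> t (\<lambda>rs bs. 2 ^ 10 * (Ml K p g rs bs ^ 10 + (2 * Gb) ^ 10))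
       = 2 ^ 10 * (Ef K p \<eta> t (\<lambda>rs bs. Ml K p g rs bs ^ 10) + (2 * Gb) ^ 10 * Ef K p \<eta> t (\<lambda>_ _. 1))"
      by (simp only: Ef_cmult Ef_add Ef_const[where c="(2 * Gb) ^ 10"])
    then show ?thesis by (simp add: mom_def Ef_one[OF t])
  qed
  also have "\<dots> \<le> 2 ^ 10 * (Cm c0 5 * real t ^ 5 + (2 * Gb) ^ 10 * real t ^ 5)"
  proof -
    have "1 \<le> real t ^ 5" using t by (simp add: one_le_power)
    then have "(2 * Gb) ^ 10 * 1 \<le> (2 * Gb) ^ 10 * real t ^ 5" using Gb0 by (intro mult_left_mono) auto
    then show ?thesis using mom_bound[OF t, of 5] by simp
  qed
  also have "\<dots> = CS * real t ^ 5" unfolding CS_def by (simp add: algebra_simps)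
  finally show ?thesis .
qed

lemma CS0: "0 \<le> CS" unfolding CS_def using Cm_ge1[OF c00, of 5] Gb0 by simp

lemma tail:
  assumes "t \<ge> 1" "a > 0" "\<And>rs bs. length rs = t \<Longrightarrow> length bs = t \<Longrightarrow> Q rs bs \<Longrightarrow> a \<le> \<bar>Sl rs bs\<bar>"
  shows "Ef K p \<eta> t (\<lambda>rs bs. if Q rs bs then 1 else 0) \<le> CS * real t ^ 5 / a ^ 10"
proof -
  have "Ef K p \<eta> t (\<lambda>rs bs. if Q rs bs then 1 else 0) \<le> Ef K p \<eta> t (\<lambda>rs bs. (1 / a ^ 10) * Sl rs bs ^ 10)"
  proof (rule Ef_mono')
    fix rs :: "'s list" and bs :: "bool list" assume l: "length rs = t" "length bs = t"
    show "(if Q rs bs then 1 else 0) \<le> 1 / a ^ 10 * Sl rs bs ^ 10"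
    proof (cases "Q rs bs")
      case True
      then have "a ^ 10 \<le> \<bar>Sl rs bs\<bar> ^ 10" using assms(2) assms(3)[OF l True] by (intro power_mono) auto
      then have "a ^ 10 \<le> Sl rs bs ^ 10" by (simp add: power_even_abs)
      then show ?thesis using True assms(2) by (simp add: field_simps)
    qed (simp add: zero_le_even_power)
  qed
  also have "\<dots> \<le> (1 / a ^ 10) * (CS * real t ^ 5)"
    unfolding Ef_cmult using Sl_moment[OF assms(1)] assms(2) by (intro mult_left_mono) auto
  finally show ?thesis by simp
qed

end


definition cnt :: "(nat \<Rightarrow> 'a \<Rightarrow> bool) \<Rightarrow> nat \<Rightarrow> 'a \<Rightarrow> nat" where
  "cnt \<xi> T \<omega> = (\<Sum>j=1..T. if \<xi> j \<omega> then 1 else 0)"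

lemma failures_cnt: "failures \<xi> m \<omega> = (LEAST k. cnt \<xi> (k + m) \<omega> = m)"
  unfolding failures_def cnt_def by simp

lemma failures0: "failures \<xi> 0 \<omega> = 0"
  unfolding failures_cnt by (rule Least_eq_0) (simp add: cnt_def)

lemma cnt_Suc: "cnt \<xi> (Suc T) \<omega> = cnt \<xi> T \<omega> + (if \<xi> (Suc T) \<omega> then 1 else 0)"
  unfolding cnt_def by simp

lemma cnt_mono: "T \<le> T' \<Longrightarrow> cnt \<xi> T \<omega> \<le> cnt \<xi> T' \<omega>"
proof (induction T' rule: dec_induct)
  case (step T')
  then show ?case by (simp add: cnt_Suc)
qed simp

lemma cnt_le: "cnt \<xi> T \<omega> \<le> T"
  by (induction T) (auto simp: cnt_Suc cnt_def[of _ 0])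

lemma good:
  assumes "cnt \<xi> (k0 + n) \<omega> = n"
  shows "m < failures \<xi> n \<omega> \<longleftrightarrow> cnt \<xi> (m + n) \<omega> < n"
proof -
  define f where "f = failures \<xi> n \<omega>"
  have f: "cnt \<xi> (f + n) \<omega> = n" unfolding f_def failures_cnt by (rule LeastI[of _ k0]) (rule assms)
  have nl: "m < f \<Longrightarrow> cnt \<xi> (m + n) \<omega> \<noteq> n" unfolding f_def failures_cnt by (rule not_less_Least)
  show ?thesis unfolding f_def[symmetric]
  proof
    assume "m < f"
    then show "cnt \<xi> (m + n) \<omega> < n" using nl cnt_mono[of "m + n" "f + n" \<xi> \<omega>] f by fastforce
  next
    assume a: "cnt \<xi> (m + n) \<omega> < n"
    show "m < f"
    proof (rule ccontr)
      assume "\<not> m < f"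
      then have "cnt \<xi> (f + n) \<omega> \<le> cnt \<xi> (m + n) \<omega>" by (intro cnt_mono) auto
      then show False using a f by simp
    qed
  qed
qed

lemma bad:
  assumes "\<forall>k. cnt \<xi> (k + n) \<omega> \<noteq> n"
  shows "cnt \<xi> (k + n) \<omega> < n"
proof (induction k)
  case 0
  have "cnt \<xi> (0 + n) \<omega> \<noteq> n" using assms by blast
  then show ?case using cnt_le[of \<xi> n \<omega>] by (simp add: less_le)
next
  case (Suc k)
  have "cnt \<xi> (Suc k + n) \<omega> \<le> cnt \<xi> (k + n) \<omega> + 1" by (simp add: cnt_Suc)
  then have le: "cnt \<xi> (Suc k + n) \<omega> \<le> n" using Suc.IH by linarith
  moreover have "cnt \<xi> (Suc k + n) \<omega> \<noteq> n" using assms by blast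
  ultimately show ?case by (simp add: less_le)
qed

lemma telescope: "(\<Sum>i=1..n. Gt \<xi> i \<omega> - 1) = real (failures \<xi> n \<omega>) - real n"
proof (induction n)
  case 0
  then show ?case by (simp add: failures0)
next
  case (Suc n)
  then show ?case by (simp add: Gt_def)
qed


lemma tail_inv_sq:
  fixes s :: nat assumes s: "s \<ge> 1"
  shows "summable (\<lambda>t. 1 / (real t + real s + 1)^2) \<and> (\<Sum>t. 1 / (real t + real s + 1)^2) \<le> 1 / real s"
proof -
  define f where "f t = 1 / (real s + real t)" for t
  have lim: "f \<longlonglongrightarrow> 0"
    unfolding f_def
    by (intro tendsto_divide_0[OF tendsto_const] filterlim_at_top_imp_at_infinity
        filterlim_tendsto_add_at_top[OF tendsto_const filterlim_real_sequentially])
  have tel: "(\<lambda>t. f t - f (Suc t)) sums (f 0 - 0)" by (rule telescope_sums'[OF lim])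
  have le: "1 / (real t + real s + 1)^2 \<le> f t - f (Suc t)" for t
  proof -
    have pos: "0 < real t + real s" using s by simp
    have "f t - f (Suc t) = 1 / ((real t + real s) * (real t + real s + 1))"
      unfolding f_def using pos by (simp add: field_simps)
    also have "1 / (real t + real s + 1)^2 \<le> 1 / ((real t + real s) * (real t + real s + 1))"
      using pos by (intro divide_left_mono) (auto simp: power2_eq_square intro!: mult_pos_pos)
    finally show ?thesis by simp
  qed
  have nn: "0 \<le> 1 / (real t + real s + 1)^2" for t by simp
  have sm: "summable (\<lambda>t. 1 / (real t + real s + 1)^2)"
    by (rule summable_comparison_test'[OF sums_summable[OF tel]]) (use le in auto)
  moreover have "(\<Sum>t. 1 / (real t + real s + 1)^2) \<le> (\<Sum>t. f t - f (Suc t))"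
    by (rule suminf_le[OF le sm sums_summable[OF tel]])
  moreover have "(\<Sum>t. f t - f (Suc t)) = 1 / real s" using tel sums_unique by (fastforce simp: f_def)
  ultimately show ?thesis by simp
qed

lemma pow5_le: fixes n t :: real assumes "0 \<le> n" "0 \<le> t"
  shows "(2 * n + t) ^ 5 \<le> 1024 * (n ^ 5 + t ^ 5)"
proof -
  have "(2 * n + t) ^ 5 \<le> (4 * max n t) ^ 5" using assms by (intro power_mono) auto
  also have "\<dots> = 1024 * max n t ^ 5" by (simp add: power_mult_distrib)
  also have "max n t ^ 5 \<le> n ^ 5 + t ^ 5" using assms by (cases "n \<le> t") (auto simp: max_def)
  finally show ?thesis by simp
qed

lemma exists_s: assumes "n \<ge> (1::nat)"
  shows "\<exists>s::nat. 1 \<le> s \<and> real n \<le> real s ^ 2 \<and> real s ^ 2 \<le> 4 * real n"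
proof -
  define r where "r = sqrt (real n)"
  have r1: "1 \<le> r" unfolding r_def using assms by simp
  define s where "s = nat \<lceil>r\<rceil>"
  have sr: "r \<le> real s" unfolding s_def using r1 by linarith
  have sr2: "real s \<le> 2 * r" unfolding s_def using r1 by linarith
  have "real n = r ^ 2" unfolding r_def by simp
  moreover have "r ^ 2 \<le> real s ^ 2" using sr r1 by (intro power_mono) auto
  moreover have "real s ^ 2 \<le> (2 * r) ^ 2" using sr2 sr r1 by (intro power_mono) auto
  moreover have "1 \<le> s" using sr r1 by linarith
  ultimately show ?thesis by (intro exI[of _ s]) (auto simp: power_mult_distrib)
qed

lemma pt_bound:
  fixes N S T C :: real
  assumes N0: "0 \<le> N" and C0: "0 \<le> C" and S1: "1 \<le> S" and ST: "S \<le> T"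
  shows "C * (2 * N + T) ^ 5 * (T + 1) ^ 3 / T ^ 10 \<le> 32768 * C * (N ^ 5 / S ^ 5 + 1) / (T + 1) ^ 2"
proof -
  have T1: "1 \<le> T" using S1 ST by linarith
  have Tp: "0 < T" using T1 by linarith
  have A: "(2 * N + T) ^ 5 * (T + 1) ^ 3 \<le> 1024 * (N ^ 5 + T ^ 5) * (8 * T ^ 3)"
  proof (rule mult_mono)
    show "(2 * N + T) ^ 5 \<le> 1024 * (N ^ 5 + T ^ 5)" using N0 Tp by (intro pow5_le) auto
    have "(T + 1) ^ 3 \<le> (2 * T) ^ 3" using T1 by (intro power_mono) auto
    then show "(T + 1) ^ 3 \<le> 8 * T ^ 3" by (simp add: power_mult_distrib)
  qed (use N0 Tp in auto)
  have "C * (2 * N + T) ^ 5 * (T + 1) ^ 3 / T ^ 10 \<le> C * (1024 * (N ^ 5 + T ^ 5) * (8 * T ^ 3)) / T ^ 10"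
    using A C0 Tp by (simp add: divide_right_mono mult_left_mono mult.assoc)
  also have "\<dots> = 8192 * C * (N ^ 5 / T ^ 7 + 1 / T ^ 2)"
    using Tp by (simp add: field_simps power_add[symmetric] eval_nat_numeral)
  also have "\<dots> \<le> 8192 * C * (N ^ 5 / (S ^ 5 * T ^ 2) + 1 / T ^ 2)"
  proof -
    have "S ^ 5 * T ^ 2 \<le> T ^ 5 * T ^ 2" using S1 ST by (intro mult_right_mono power_mono) auto
    also have "\<dots> = T ^ 7" by (simp add: power_add[symmetric])
    finally have "N ^ 5 / T ^ 7 \<le> N ^ 5 / (S ^ 5 * T ^ 2)"
      using S1 Tp N0 by (intro divide_left_mono) auto
    then show ?thesis using C0 by (intro mult_left_mono) auto
  qed
  also have "\<dots> = 8192 * C * (N ^ 5 / S ^ 5 + 1) * (1 / T ^ 2)"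
    using S1 Tp by (simp add: field_simps)
  also have "\<dots> \<le> 8192 * C * (N ^ 5 / S ^ 5 + 1) * (4 / (T + 1) ^ 2)"
  proof (rule mult_left_mono)
    have "(T + 1) ^ 2 \<le> (2 * T) ^ 2" using T1 by (intro power_mono) auto
    then have "(T + 1) ^ 2 \<le> 4 * T ^ 2" by (simp add: power_mult_distrib)
    then show "1 / T ^ 2 \<le> 4 / (T + 1) ^ 2" using Tp by (simp add: field_simps)
    show "0 \<le> 8192 * C * (N ^ 5 / S ^ 5 + 1)" using C0 N0 S1 by simp
  qed
  also have "\<dots> = 32768 * C * (N ^ 5 / S ^ 5 + 1) / (T + 1) ^ 2" by simp
  finally show ?thesis .
qed

lemma series_bound:
  fixes a :: "nat \<Rightarrow> real" and n :: nat and C :: real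
  assumes n1: "n \<ge> 1" and C0: "C \<ge> 0" and a0: "\<And>t. 0 \<le> a t"
    and a1: "\<And>t. a t \<le> 8 * (real t + 1) ^ 3"
    and a2: "\<And>t. t \<ge> 1 \<Longrightarrow> a t \<le> C * (2 * real n + real t) ^ 5 * (real t + 1) ^ 3 / real t ^ 10"
  shows "summable a \<and> suminf a \<le> (128 + 65536 * C) * real n ^ 2"
proof -
  obtain s where s1: "1 \<le> s" and ns: "real n \<le> real s ^ 2" and sn: "real s ^ 2 \<le> 4 * real n"
    using exists_s[OF n1] by blast
  have sp: "0 < real s" using s1 by simp
  define Lc where "Lc = 32768 * C * (real n ^ 5 / real s ^ 5 + 1)"
  define u where "u t = (if t < s then 8 * real s ^ 3 else Lc / (real t + 1) ^ 2)" for t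
  have au: "a t \<le> u t" for t
  proof (cases "t < s")
    case True
    have "(real t + 1) ^ 3 \<le> real s ^ 3" using True by (intro power_mono) auto
    then have "a t \<le> 8 * real s ^ 3" using a1[of t] by linarith
    then show ?thesis using True unfolding u_def by simp
  next
    case False
    then have "a t \<le> C * (2 * real n + real t) ^ 5 * (real t + 1) ^ 3 / real t ^ 10"
      using s1 by (intro a2) auto
    also have "\<dots> \<le> Lc / (real t + 1) ^ 2" unfolding Lc_def
      using False s1 C0 by (intro pt_bound) auto
    finally show ?thesis using False unfolding u_def by simp
  qed
  obtain ts where ts: "summable (\<lambda>t. 1 / (real t + real s + 1)^2)" "(\<Sum>t. 1 / (real t + real s + 1)^2) \<le> 1 / real s"
    using tail_inv_sq[OF s1] by blast
  have ushift: "u (t + s) = Lc * (1 / (real t + real s + 1)^2)" for t unfolding u_def by simp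
  have sum_sh: "summable (\<lambda>t. u (t + s))" unfolding ushift by (intro summable_mult ts(1))
  then have su: "summable u" by (simp add: summable_iff_shift)
  have "suminf u = (\<Sum>t. u (t + s)) + (\<Sum>i<s. u i)" by (rule suminf_split_initial_segment[OF su])
  also have "(\<Sum>t. u (t + s)) = Lc * (\<Sum>t. 1 / (real t + real s + 1)^2)"
    unfolding ushift by (rule suminf_mult[OF ts(1)])
  also have "(\<Sum>i<s. u i) = real s * (8 * real s ^ 3)" unfolding u_def by simp
  finally have su_eq: "suminf u = Lc * (\<Sum>t. 1 / (real t + real s + 1)^2) + real s * (8 * real s ^ 3)" .
  have Lc0: "0 \<le> Lc" unfolding Lc_def using C0 by simp
  have "suminf u \<le> Lc / real s + 8 * real s ^ 4"
    unfolding su_eq using mult_left_mono[OF ts(2) Lc0] by (simp add: eval_nat_numeral)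
  also have "8 * real s ^ 4 \<le> 128 * real n ^ 2"
  proof -
    have "real s ^ 4 = (real s ^ 2) ^ 2" by (simp add: power_mult[symmetric])
    also have "\<dots> \<le> (4 * real n) ^ 2" using sn by (intro power_mono) auto
    finally show ?thesis by (simp add: power_mult_distrib)
  qed
  also have "Lc / real s \<le> 65536 * C * real n ^ 2"
  proof -
    have n3: "real n ^ 3 \<le> real s ^ 6"
    proof -
      have "real n ^ 3 \<le> (real s ^ 2) ^ 3" using ns by (intro power_mono) auto
      then show ?thesis by (simp add: power_mult[symmetric])
    qed
    have np: "0 < real n" using n1 by simp
    have "real n ^ 5 / real s ^ 6 \<le> real n ^ 5 / real n ^ 3"
      using n3 np sp by (intro divide_left_mono) auto
    also have "\<dots> = real n ^ 2" using np by (simp add: field_simps eval_nat_numeral)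
    finally have A: "real n ^ 5 / real s ^ 6 \<le> real n ^ 2" .
    have B: "1 / real s \<le> 1" using s1 by simp
    have n2: "1 \<le> real n ^ 2" using n1 by simp
    have "Lc / real s = 32768 * C * (real n ^ 5 / real s ^ 6 + 1 / real s)"
      unfolding Lc_def using sp by (simp add: field_simps eval_nat_numeral)
    also have "\<dots> \<le> 32768 * C * (real n ^ 2 + real n ^ 2)"
      using A B n2 C0 by (intro mult_left_mono) auto
    finally show ?thesis by simp
  qed
  finally have "suminf u \<le> (128 + 65536 * C) * real n ^ 2" by (simp add: algebra_simps)
  moreover have "summable a" by (rule summable_comparison_test'[OF su]) (use a0 au in auto)
  moreover have "suminf a \<le> suminf u" by (rule suminf_le[OF au \<open>summable a\<close> su])
  ultimately show ?thesis by simp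
qed


lemma pow4_sum: "real X ^ 4 \<le> (\<Sum>t<X. 4 * (real t + 1) ^ 3)"
proof (induction X)
  case (Suc X)
  have "real (Suc X) ^ 4 - real X ^ 4 \<le> 4 * (real X + 1) ^ 3"
    by (simp add: eval_nat_numeral algebra_simps)
  then show ?case using Suc by simp
qed simp

context mcg
begin

lemma cnt_sum: "real (cnt \<xi> T \<omega>) = (\<Sum>j<length (Bs T \<omega>). bv (Bs T \<omega> ! j))"
proof -
  have "real (cnt \<xi> T \<omega>) = (\<Sum>j<T. bv (\<xi> (Suc j) \<omega>))"
    by (induction T) (simp_all add: cnt_Suc cnt_def[of _ 0] bv_def)
  also have "\<dots> = (\<Sum>j<length (Bs T \<omega>). bv (Bs T \<omega> ! j))"
    by (simp add: Bs_def)
  finally show ?thesis .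
qed

definition Ep where "Ep n t = {\<omega> \<in> space M. cnt \<xi> (2*n+t) \<omega> < n}"
definition Em where "Em n t = {\<omega> \<in> space M. t < n \<and> n \<le> cnt \<xi> (2*n - t - 1) \<omega>}"

lemma Ep_eq: "Ep n t = {\<omega> \<in> space M. (\<lambda>rs bs. (\<Sum>j<length bs. bv (bs ! j)) < real n) (Rs (2*n+t) \<omega>) (Bs (2*n+t) \<omega>)}"
  unfolding Ep_def using cnt_sum by (auto simp del: length_Bs) (metis of_nat_less_iff)+

lemma Em_eq: "t < n \<Longrightarrow> Em n t = {\<omega> \<in> space M. (\<lambda>rs bs. real n \<le> (\<Sum>j<length bs. bv (bs ! j))) (Rs (2*n-t-1) \<omega>) (Bs (2*n-t-1) \<omega>)}"
  unfolding Em_def using cnt_sum by (auto simp del: length_Bs) (metis of_nat_le_iff)+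

lemma Ep_sets: "Ep n t \<in> sets M" unfolding Ep_eq by (rule ev_sets)

lemma Em_sets: "Em n t \<in> sets M"
proof (cases "t < n")
  case True then show ?thesis unfolding Em_eq[OF True]
    using ev_sets[of "\<lambda>rs bs. real n \<le> (\<Sum>j<length bs. bv (bs ! j))" "2*n-t-1"] by simp
next
  case False then have "Em n t = {}" unfolding Em_def by auto
  then show ?thesis by simp
qed

lemma bnd0: "0 \<le> 2 ^ 10 * CS * (2 * real n + real t) ^ 5 / real t ^ 10"
  using CS0 by simp

lemma Ep_meas:
  assumes "n \<ge> 1" "t \<ge> 1"
  shows "measure M (Ep n t) \<le> 2 ^ 10 * CS * (2 * real n + real t) ^ 5 / real t ^ 10"
proof -
  define T where "T = 2*n+t"
  have T1: "T \<ge> 1" unfolding T_def using assms by simp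
  have "measure M (Ep n t) = Ef K p \<eta> T (\<lambda>rs bs. if (\<Sum>j<length bs. bv (bs ! j)) < real n then 1 else 0)"
    unfolding Ep_eq T_def[symmetric] by (rule ev_measure[OF T1])
  also have "\<dots> \<le> CS * real T ^ 5 / (real t / 2) ^ 10"
  proof (rule tail[OF T1])
    show "0 < real t / 2" using assms by simp
    fix rs :: "'s list" and bs :: "bool list"
    assume l: "length rs = T" "length bs = T" and q: "(\<Sum>j<length bs. bv (bs ! j)) < real n"
    have e: "Sl rs bs = (\<Sum>j<length bs. bv (bs ! j)) - real T / 2" unfolding Sl_def using l by simp
    have rT: "real T = 2 * real n + real t" unfolding T_def by simp
    show "real t / 2 \<le> \<bar>Sl rs bs\<bar>" using e rT q by linarith
  qed
  also have "\<dots> = 2 ^ 10 * CS * (2 * real n + real t) ^ 5 / real t ^ 10"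
    unfolding T_def by (simp add: power_divide)
  finally show ?thesis .
qed

lemma Em_meas:
  assumes "n \<ge> 1" "t \<ge> 1"
  shows "measure M (Em n t) \<le> 2 ^ 10 * CS * (2 * real n + real t) ^ 5 / real t ^ 10"
proof (cases "t < n")
  case False
  then have "Em n t = {}" unfolding Em_def by auto
  then show ?thesis using bnd0[of n t] by simp
next
  case True
  define T where "T = 2*n-t-1"
  have T1: "T \<ge> 1" unfolding T_def using True by simp
  have rT: "real T = 2 * real n - real t - 1" unfolding T_def using True by (simp add: of_nat_diff)
  have "measure M (Em n t) = Ef K p \<eta> T (\<lambda>rs bs. if real n \<le> (\<Sum>j<length bs. bv (bs ! j)) then 1 else 0)"
    unfolding Em_eq[OF True] T_def[symmetric] by (rule ev_measure[OF T1])
  also have "\<dots> \<le> CS * real T ^ 5 / (real t / 2) ^ 10"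
  proof (rule tail[OF T1])
    show "0 < real t / 2" using assms by simp
    fix rs :: "'s list" and bs :: "bool list"
    assume l: "length rs = T" "length bs = T" and q: "real n \<le> (\<Sum>j<length bs. bv (bs ! j))"
    have e: "Sl rs bs = (\<Sum>j<length bs. bv (bs ! j)) - real T / 2" unfolding Sl_def using l by simp
    show "real t / 2 \<le> \<bar>Sl rs bs\<bar>" using e rT q by linarith
  qed
  also have "\<dots> = 2 ^ 10 * CS * real T ^ 5 / real t ^ 10" by (simp add: power_divide)
  also have "\<dots> \<le> 2 ^ 10 * CS * (2 * real n + real t) ^ 5 / real t ^ 10"
    using rT CS0 True by (intro divide_right_mono mult_left_mono power_mono) auto
  finally show ?thesis .
qed

definition Nb where "Nb n = {\<omega> \<in> space M. \<forall>k. cnt \<xi> (k + n) \<omega> \<noteq> n}"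

lemma Nb_sets: "Nb n \<in> sets M"
  unfolding Nb_def
proof (rule sets.sets_Collect_countable_All)
  fix k
  have "{\<omega> \<in> space M. cnt \<xi> (k + n) \<omega> \<noteq> n} = {\<omega> \<in> space M. (\<lambda>rs bs. (\<Sum>j<length bs. bv (bs ! j)) \<noteq> real n) (Rs (k+n) \<omega>) (Bs (k+n) \<omega>)}"
    using cnt_sum by (auto simp del: length_Bs) (metis of_nat_eq_iff)+
  then show "{\<omega> \<in> space M. cnt \<xi> (k + n) \<omega> \<noteq> n} \<in> sets M" using ev_sets by simp
qed

lemma Nb_null: assumes "n \<ge> 1" shows "Nb n \<in> null_sets M"
proof -
  interpret prob_space M by (rule PS)
  have sub: "Nb n \<subseteq> Ep n t" for t
  proof
    fix \<omega> assume "\<omega> \<in> Nb n"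
    then have "\<omega> \<in> space M" "\<forall>k. cnt \<xi> (k + n) \<omega> \<noteq> n" unfolding Nb_def by auto
    then show "\<omega> \<in> Ep n t" using bad[of \<xi> n \<omega> "n + t"] unfolding Ep_def by (simp add: mult_2 add.commute add.left_commute)
  qed
  define m where "m = measure M (Nb n)"
  have mle: "m \<le> 2 ^ 15 * CS / real t" if t: "t \<ge> 2 * n" for t
  proof -
    have t1: "t \<ge> 1" using t assms by simp
    have tp: "0 < real t" using t1 by simp
    have "m \<le> measure M (Ep n t)" unfolding m_def using sub Ep_sets by (intro finite_measure_mono) auto
    also have "\<dots> \<le> 2 ^ 10 * CS * (2 * real n + real t) ^ 5 / real t ^ 10" by (rule Ep_meas[OF assms t1])
    also have "\<dots> \<le> 2 ^ 10 * CS * (2 * real t) ^ 5 / real t ^ 10"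
      using t CS0 tp by (intro divide_right_mono mult_left_mono power_mono) auto
    also have "\<dots> = 2 ^ 15 * CS / real t ^ 5" using tp by (simp add: power_mult_distrib field_simps eval_nat_numeral)
    also have "\<dots> \<le> 2 ^ 15 * CS / real t"
    proof (rule divide_left_mono)
      show "real t \<le> real t ^ 5" using t1 by (simp add: self_le_power)
    qed (use CS0 tp in auto)
    finally show ?thesis .
  qed
  have "m = 0"
  proof (rule ccontr)
    assume "m \<noteq> 0"
    then have mp: "m > 0" unfolding m_def by (simp add: zero_less_measure_iff)
    obtain t :: nat where t: "t > 2 ^ 15 * CS / m + 2 * n" by (meson reals_Archimedean2)
    have "0 \<le> 2 ^ 15 * CS / m" using CS0 mp by simp
    then have "real (2 * n) < real t" using t by linarith
    then have t2: "t \<ge> 2 * n" by simp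
    have tp: "0 < real t" using t \<open>0 \<le> 2 ^ 15 * CS / m\<close> by linarith
    have "2 ^ 15 * CS / m < real t" using t by linarith
    then have "2 ^ 15 * CS < m * real t" using mp by (simp add: divide_less_eq mult.commute)
    then have "2 ^ 15 * CS / real t < m" using tp by (simp add: divide_less_eq)
    then show False using mle[OF t2] by linarith
  qed
  then have "emeasure M (Nb n) = 0" unfolding m_def by (simp add: emeasure_eq_measure)
  then show ?thesis using Nb_sets by (intro null_setsI)
qed

end


context mcg
begin

lemma pointwise:
  assumes n1: "n \<ge> 1" and om: "\<omega> \<in> space M" "\<omega> \<notin> Nb n"
  shows "ennreal ((\<Sum>i=1..n. Gt \<xi> i \<omega> - 1) ^ 4)
     \<le> (\<Sum>t. ennreal (4 * (real t + 1) ^ 3) * (indicator (Ep n t) \<omega> + indicator (Em n t) \<omega>))"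
proof -
  obtain k0 where k0: "cnt \<xi> (k0 + n) \<omega> = n" using om unfolding Nb_def by auto
  define f where "f = failures \<xi> n \<omega>"
  have gd: "m < f \<longleftrightarrow> cnt \<xi> (m + n) \<omega> < n" for m unfolding f_def by (rule good[OF k0])
  define X where "X = (if n \<le> f then f - n else n - f)"
  have eq: "(\<Sum>i=1..n. Gt \<xi> i \<omega> - 1) ^ 4 = real X ^ 4"
  proof -
    have "(\<Sum>i=1..n. Gt \<xi> i \<omega> - 1) = real f - real n" unfolding f_def by (rule telescope)
    moreover have "(real f - real n) ^ 4 = real X ^ 4"
    proof (cases "n \<le> f")
      case True then show ?thesis unfolding X_def by (simp add: of_nat_diff)
    next
      case False
      then have "real f - real n = - real (n - f)" by (simp add: of_nat_diff)
      moreover have "(- y) ^ 4 = y ^ 4" for y :: real by (simp add: eval_nat_numeral)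
      ultimately show ?thesis using False unfolding X_def by metis
    qed
    ultimately show ?thesis by simp
  qed
  have ind: "1 \<le> indicator (Ep n t) \<omega> + (indicator (Em n t) \<omega> :: ennreal)" if t: "t < X" for t
  proof (cases "n \<le> f")
    case True
    then have "n + t < f" using t unfolding X_def by simp
    then have "cnt \<xi> (n + t + n) \<omega> < n" using gd by blast
    then have "\<omega> \<in> Ep n t" using om unfolding Ep_def by (simp add: mult_2 add.commute add.left_commute)
    then show ?thesis by simp
  next
    case False
    then have tn: "t < n" and "f \<le> n - t - 1" using t unfolding X_def by auto
    then have "\<not> (n - t - 1 < f)" by simp
    then have "\<not> cnt \<xi> (n - t - 1 + n) \<omega> < n" using gd by blast
    moreover have "n - t - 1 + n = 2 * n - t - 1" using tn by simp
    ultimately have "\<omega> \<in> Em n t" using om tn unfolding Em_def by simp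
    then show ?thesis by simp
  qed
  have "ennreal ((\<Sum>i=1..n. Gt \<xi> i \<omega> - 1) ^ 4) \<le> ennreal (\<Sum>t<X. 4 * (real t + 1) ^ 3)"
    unfolding eq by (intro ennreal_leI pow4_sum)
  also have "\<dots> = (\<Sum>t<X. ennreal (4 * (real t + 1) ^ 3))" by (rule sum_ennreal[symmetric]) simp
  also have "\<dots> \<le> (\<Sum>t<X. ennreal (4 * (real t + 1) ^ 3) * (indicator (Ep n t) \<omega> + indicator (Em n t) \<omega>))"
  proof (rule sum_mono)
    fix t assume "t \<in> {..<X}"
    then have "1 \<le> indicator (Ep n t) \<omega> + (indicator (Em n t) \<omega> :: ennreal)" using ind by simp
    then have "ennreal (4 * (real t + 1) ^ 3) * 1 \<le> ennreal (4 * (real t + 1) ^ 3) * (indicator (Ep n t) \<omega> + indicator (Em n t) \<omega>)"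
      by (rule mult_left_mono) simp
    then show "ennreal (4 * (real t + 1) ^ 3) \<le> ennreal (4 * (real t + 1) ^ 3) * (indicator (Ep n t) \<omega> + indicator (Em n t) \<omega>)" by simp
  qed
  also have "\<dots> \<le> (\<Sum>t. ennreal (4 * (real t + 1) ^ 3) * (indicator (Ep n t) \<omega> + indicator (Em n t) \<omega>))"
    by (rule sum_le_suminf) (auto intro: summableI)
  finally show ?thesis .
qed

definition Afin where "Afin = 128 + 65536 * (2 ^ 13 * CS)"

lemma main_bound:
  assumes n1: "n \<ge> 1"
  shows "(\<integral>\<^sup>+ \<omega>. ennreal ((\<Sum>i=1..n. Gt \<xi> i \<omega> - 1) ^ 4) \<partial>M) \<le> ennreal (Afin * real n ^ 2)"
proof -
  interpret prob_space M by (rule PS)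
  define a where "a t = 4 * (real t + 1) ^ 3 * (measure M (Ep n t) + measure M (Em n t))" for t
  have ser: "summable a \<and> suminf a \<le> (128 + 65536 * (2 ^ 13 * CS)) * real n ^ 2"
  proof (rule series_bound[OF n1])
    show "0 \<le> 2 ^ 13 * CS" using CS0 by simp
    show "0 \<le> a t" for t unfolding a_def by simp
    show "a t \<le> 8 * (real t + 1) ^ 3" for t
    proof -
      have "measure M (Ep n t) + measure M (Em n t) \<le> 2" using prob_le_1[of "Ep n t"] prob_le_1[of "Em n t"] by linarith
      then have "4 * (real t + 1) ^ 3 * (measure M (Ep n t) + measure M (Em n t)) \<le> 4 * (real t + 1) ^ 3 * 2"
        by (intro mult_left_mono) auto
      then show ?thesis unfolding a_def by simp
    qed
    show "a t \<le> 2 ^ 13 * CS * (2 * real n + real t) ^ 5 * (real t + 1) ^ 3 / real t ^ 10" if t1: "t \<ge> 1" for t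
    proof -
      have "measure M (Ep n t) + measure M (Em n t) \<le> 2 * (2 ^ 10 * CS * (2 * real n + real t) ^ 5 / real t ^ 10)"
        using Ep_meas[OF n1 t1] Em_meas[OF n1 t1] by simp
      then have "a t \<le> 4 * (real t + 1) ^ 3 * (2 * (2 ^ 10 * CS * (2 * real n + real t) ^ 5 / real t ^ 10))"
        unfolding a_def by (intro mult_left_mono) auto
      then show ?thesis by (simp add: field_simps)
    qed
  qed
  have meas: "(\<lambda>\<omega>. ennreal (4 * (real t + 1) ^ 3) * (indicator (Ep n t) \<omega> + indicator (Em n t) \<omega>)) \<in> borel_measurable M" for t
    by (intro borel_measurable_times_ennreal borel_measurable_add borel_measurable_const borel_measurable_indicator Ep_sets Em_sets)
  have "(\<integral>\<^sup>+ \<omega>. ennreal ((\<Sum>i=1..n. Gt \<xi> i \<omega> - 1) ^ 4) \<partial>M)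
     \<le> (\<integral>\<^sup>+ \<omega>. (\<Sum>t. ennreal (4 * (real t + 1) ^ 3) * (indicator (Ep n t) \<omega> + indicator (Em n t) \<omega>)) \<partial>M)"
  proof (rule nn_integral_mono_AE)
    show "AE \<omega> in M. ennreal ((\<Sum>i=1..n. Gt \<xi> i \<omega> - 1) ^ 4) \<le> (\<Sum>t. ennreal (4 * (real t + 1) ^ 3) * (indicator (Ep n t) \<omega> + indicator (Em n t) \<omega>))"
      using AE_not_in[OF Nb_null[OF n1]] AE_space
      by eventually_elim (rule pointwise[OF n1])
  qed
  also have "\<dots> = (\<Sum>t. \<integral>\<^sup>+ \<omega>. ennreal (4 * (real t + 1) ^ 3) * (indicator (Ep n t) \<omega> + indicator (Em n t) \<omega>) \<partial>M)"
    by (rule nn_integral_suminf[OF meas])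
  also have "\<dots> = (\<Sum>t. ennreal (a t))"
  proof (rule suminf_cong)
    fix t
    have "(\<integral>\<^sup>+ \<omega>. ennreal (4 * (real t + 1) ^ 3) * (indicator (Ep n t) \<omega> + indicator (Em n t) \<omega>) \<partial>M)
        = ennreal (4 * (real t + 1) ^ 3) * (\<integral>\<^sup>+ \<omega>. (indicator (Ep n t) \<omega> + indicator (Em n t) \<omega>) \<partial>M)"
      by (intro nn_integral_cmult borel_measurable_add borel_measurable_indicator Ep_sets Em_sets)
    also have "(\<integral>\<^sup>+ \<omega>. (indicator (Ep n t) \<omega> + indicator (Em n t) \<omega>) \<partial>M) = emeasure M (Ep n t) + emeasure M (Em n t)"
      using Ep_sets Em_sets by (simp add: nn_integral_add)
    also have "\<dots> = ennreal (measure M (Ep n t) + measure M (Em n t))"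
      by (simp add: emeasure_eq_measure ennreal_plus)
    finally show "(\<integral>\<^sup>+ \<omega>. ennreal (4 * (real t + 1) ^ 3) * (indicator (Ep n t) \<omega> + indicator (Em n t) \<omega>) \<partial>M) = ennreal (a t)"
      unfolding a_def by (simp add: ennreal_mult)
  qed
  also have "\<dots> = ennreal (suminf a)"
  proof (rule suminf_ennreal2)
    show "0 \<le> a i" for i unfolding a_def by simp
    show "summable a" using ser by simp
  qed
  also have "\<dots> \<le> ennreal (Afin * real n ^ 2)"
    using ser unfolding Afin_def by (intro ennreal_leI) simp
  finally show ?thesis .
qed

lemma Afin_pos: "Afin > 0" unfolding Afin_def using CS0 by simp

end


theorem lemmaA3:
  fixes K :: "'s::finite \<Rightarrow> 's \<Rightarrow> real" and p :: "'s \<Rightarrow> real" and \<mu> :: "'s \<Rightarrow> real"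
  assumes "stochastic_matrix K"
    and "\<exists>!C. closed_irreducible K C"
    and "stationary K \<mu>" and "\<forall>\<nu>. stationary K \<nu> \<longrightarrow> \<nu> = \<mu>"
    and "\<forall>r. 0 < p r \<and> p r < 1"
    and "(\<Sum>r\<in>UNIV. \<mu> r * p r) = 1/2"
  shows "\<exists>A>0. \<forall>(\<eta> :: 's \<Rightarrow> real) (M :: 'a measure) R \<xi>.
           prob_vector \<eta> \<longrightarrow> has_law K p \<eta> M R \<xi> \<longrightarrow>
           (\<forall>n\<ge>1. (\<integral>\<^sup>+ \<omega>. ennreal ((\<Sum>i=1..n. Gt \<xi> i \<omega> - 1) ^ 4) \<partial>M)
                     \<le> ennreal (A * real n ^ 2))"
proof -
  have mu1: "(\<Sum>x\<in>UNIV. \<mu> x) = 1" using assms(3) unfolding stationary_def prob_vector_def by simp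
  have f0: "(\<Sum>x\<in>UNIV. \<mu> x * (p x - 1/2)) = 0"
    using assms(6) mu1 by (simp add: right_diff_distrib sum_subtractf sum_divide_distrib[symmetric])
  obtain g where pg: "\<forall>x. g x - (\<Sum>y\<in>UNIV. K x y * g y) = p x - 1/2"
    using poisson_exists[OF assms(1) assms(3) assms(4) f0] by blast
  define Gbb where "Gbb = (\<Sum>x\<in>UNIV. \<bar>g x\<bar>)"
  define A where "A = 128 + 65536 * (2 ^ 13 * (2 ^ 10 * (Cm (1 + 2 * Gbb) 5 + (2 * Gbb) ^ 10)))"
  have Gbb0: "0 \<le> Gbb" unfolding Gbb_def by (simp add: sum_nonneg)
  have "0 \<le> Gbb ^ 10" using Gbb0 by simp
  moreover have "0 \<le> Cm (1 + 2 * Gbb) 5" using Cm_ge1[of "1 + 2 * Gbb" 5] Gbb0 by simp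
  ultimately have "0 < A" unfolding A_def using Gbb0
    by (intro add_pos_nonneg mult_nonneg_nonneg add_nonneg_nonneg zero_le_power) auto
  moreover have "\<forall>(\<eta> :: 's \<Rightarrow> real) (M :: 'a measure) R \<xi>.
           prob_vector \<eta> \<longrightarrow> has_law K p \<eta> M R \<xi> \<longrightarrow>
           (\<forall>n\<ge>1. (\<integral>\<^sup>+ \<omega>. ennreal ((\<Sum>i=1..n. Gt \<xi> i \<omega> - 1) ^ 4) \<partial>M)
                     \<le> ennreal (A * real n ^ 2))"
  proof (intro allI impI)
    fix \<eta> :: "'s \<Rightarrow> real" and M :: "'a measure" and R \<xi> and n :: nat
    assume eta: "prob_vector \<eta>" and law: "has_law K p \<eta> M R \<xi>" and n1: "1 \<le> n"
    interpret mcg K p \<eta> M R \<xi> g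
      by unfold_locales (use assms(1,5) eta law pg in \<open>auto simp: Kg_def\<close>)
    have "Afin = A" unfolding Afin_def CS_def c0_def Gb_def A_def Gbb_def ..
    then show "(\<integral>\<^sup>+ \<omega>. ennreal ((\<Sum>i=1..n. Gt \<xi> i \<omega> - 1) ^ 4) \<partial>M) \<le> ennreal (A * real n ^ 2)"
      using main_bound[OF n1] by simp
  qed
  ultimately show ?thesis by blast
qed


end
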